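(* Let $\tau>0$ and $S\subset V$, and let $S'=\{i\in V:(e^{-\tau\Delta}\chi_S)_i\ge\frac12\}$ be the result of one MBO iteration started from $S$. Let $\rho$ be the spectral radius of $\Delta$. Then $S'=S$, i.e. the MBO iterates starting from $S$ are stationary, if either of the following holds: (i) $S\ne\emptyset$ and $$\tau<\tau_\rho(S):=\rho^{-1}\log\Big(1+\tfrac12\,d_-^{r/2}(\mathrm{vol}\,S)^{-1/2}\Big);$$ (ii) $\Delta\chi_S\ne0$ and $$\tau\le\tau_\kappa(S):=\frac1{2\max_{i\in V}|(\Delta\chi_S)_i|}.$$
   Context: $G=(V,E)$ is a finite undirected weighted graph with vertex set $V=\{1,\dots,n\}$. The weights satisfy $\omega_{ij}=\omega_{ji}\ge0$, with $\omega_{ij}>0$ iff $\{i,j\}\in E$, and $\omega_{ii}=0$. The degrees are $d_i=\sum_j\omega_{ij}>0$, and $d_-=\min_id_i$. A parameter $r\in[0,1]$ is fixed. $\mathcal V$ is the space of functions $V\to\mathbb R$ with $\langle u,v\rangle_{\mathcal V}=\sum_iu_iv_id_i^r$. For $S\subset V$, $\chi_S$ is the indicator of $S$ and $\mathrm{vol}\,S=\sum_{i\in S}d_i^r$. The graph Laplacian is $(\Delta u)_i=d_i^{-r}\sum_j\omega_{ij}(u_i-u_j)$, which is self-adjoint and positive semidefinite for $\langle\cdot,\cdot\rangle_{\mathcal V}$. $e^{-t\Delta}$ is the solution operator of $\dot u=-\Delta u$. *)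

theory Defs
  imports "HOL-Analysis.Analysis"
begin

definition degree :: "('v::finite \<Rightarrow> 'v \<Rightarrow> real) \<Rightarrow> 'v \<Rightarrow> real" where
  "degree w i = (\<Sum>j\<in>UNIV. w i j)"

definition min_degree :: "('v::finite \<Rightarrow> 'v \<Rightarrow> real) \<Rightarrow> real" where
  "min_degree w = Min (range (degree w))"

definition vol :: "('v::finite \<Rightarrow> 'v \<Rightarrow> real) \<Rightarrow> real \<Rightarrow> 'v set \<Rightarrow> real" where
  "vol w r S = (\<Sum>i\<in>S. degree w i powr r)"

definition graph_laplacian ::
  "('v::finite \<Rightarrow> 'v \<Rightarrow> real) \<Rightarrow> real \<Rightarrow> ('v \<Rightarrow> real) \<Rightarrow> ('v \<Rightarrow> real)" where
  "graph_laplacian w r u = (\<lambda>i. degree w i powr (- r) * (\<Sum>j\<in>UNIV. w i j * (u i - u j)))"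

text \<open>The same linear operator acting on complex-valued functions (for the spectrum).\<close>
definition graph_laplacian_c ::
  "('v::finite \<Rightarrow> 'v \<Rightarrow> real) \<Rightarrow> real \<Rightarrow> ('v \<Rightarrow> complex) \<Rightarrow> ('v \<Rightarrow> complex)" where
  "graph_laplacian_c w r u =
     (\<lambda>i. complex_of_real (degree w i powr (- r)) *
          (\<Sum>j\<in>UNIV. complex_of_real (w i j) * (u i - u j)))"

definition laplacian_eigenvalues :: "('v::finite \<Rightarrow> 'v \<Rightarrow> real) \<Rightarrow> real \<Rightarrow> complex set" where
  "laplacian_eigenvalues w r =
     {c. \<exists>u::'v \<Rightarrow> complex. u \<noteq> (\<lambda>_. 0) \<and> graph_laplacian_c w r u = (\<lambda>i. c * u i)}"

definition laplacian_spectral_radius :: "('v::finite \<Rightarrow> 'v \<Rightarrow> real) \<Rightarrow> real \<Rightarrow> real" where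
  "laplacian_spectral_radius w r = Sup (cmod ` laplacian_eigenvalues w r)"

definition heat :: "('v::finite \<Rightarrow> 'v \<Rightarrow> real) \<Rightarrow> real \<Rightarrow> real \<Rightarrow> ('v \<Rightarrow> real) \<Rightarrow> ('v \<Rightarrow> real)" where
  "heat w r t u = (\<lambda>i. \<Sum>k. (- t) ^ k / fact k * ((graph_laplacian w r ^^ k) u) i)"

definition mbo_step :: "('v::finite \<Rightarrow> 'v \<Rightarrow> real) \<Rightarrow> real \<Rightarrow> real \<Rightarrow> 'v set \<Rightarrow> 'v set" where
  "mbo_step w r \<tau> S = {i. heat w r \<tau> (indicator S) i \<ge> 1/2}"

end

theory Submission
  imports Defs
begin


locale wgraph =
  fixes w :: "'v::finite \<Rightarrow> 'v \<Rightarrow> real" and r :: real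
  assumes sym: "\<And>i j. w i j = w j i"
    and nonneg: "\<And>i j. w i j \<ge> 0"
    and degpos: "\<And>i. degree w i > 0"
begin

abbreviation "d \<equiv> degree w"
abbreviation "L \<equiv> graph_laplacian w r"

lemma L_alt: "L u i = d i powr (-r) * (d i * u i - (\<Sum>j\<in>UNIV. w i j * u j))"
  unfolding graph_laplacian_def degree_def
  by (simp add: algebra_simps sum_subtractf sum_distrib_left sum_distrib_right)

lemma L_lin: "L (\<lambda>i. a * u i + b * v i) = (\<lambda>i. a * L u i + b * L v i)"
  unfolding L_alt
  by (rule ext) (simp add: algebra_simps sum.distrib sum_distrib_left)

lemma L_sum: "L (\<lambda>i. \<Sum>k\<in>K. a k * u k i) = (\<lambda>i. \<Sum>k\<in>K. a k * L (u k) i)"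
proof (cases "finite K")
  case True
  then show ?thesis
  unfolding L_alt
  by (intro ext) (simp add: algebra_simps sum_subtractf sum.distrib sum_distrib_left sum.swap[of _ K])
next
  case False
  then show ?thesis by (simp add: graph_laplacian_def)
qed

definition ip :: "('v \<Rightarrow> real) \<Rightarrow> ('v \<Rightarrow> real) \<Rightarrow> real" where
  "ip u v = (\<Sum>i\<in>UNIV. d i powr r * u i * v i)"

lemma dpow: "d i powr r * d i powr (-r) = 1"
  using degpos[of i] by (simp add: powr_minus field_simps)

lemma ipL: "ip (L u) v = (\<Sum>i\<in>UNIV. d i * u i * v i) - (\<Sum>i\<in>UNIV. \<Sum>j\<in>UNIV. w i j * u j * v i)"
proof -
  have "ip (L u) v = (\<Sum>i\<in>UNIV. (d i powr r * d i powr (-r)) * (d i * u i - (\<Sum>j\<in>UNIV. w i j * u j)) * v i)"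
    unfolding ip_def L_alt by (simp add: algebra_simps)
  also have "\<dots> = (\<Sum>i\<in>UNIV. d i * u i * v i - (\<Sum>j\<in>UNIV. w i j * u j * v i))"
    by (simp add: dpow algebra_simps sum_distrib_left sum_distrib_right)
  finally show ?thesis by (simp add: sum_subtractf)
qed

lemma cross_sym: "(\<Sum>i\<in>UNIV. \<Sum>j\<in>UNIV. w i j * u j * v i) = (\<Sum>i\<in>UNIV. \<Sum>j\<in>UNIV. w i j * v j * u i)"
proof -
  have "(\<Sum>i\<in>UNIV. \<Sum>j\<in>UNIV. w i j * u j * v i) = (\<Sum>j\<in>UNIV. \<Sum>i\<in>UNIV. w i j * u j * v i)"
    by (rule sum.swap)
  also have "\<dots> = (\<Sum>i\<in>UNIV. \<Sum>j\<in>UNIV. w i j * v j * u i)"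
    by (intro sum.cong refl) (metis sym mult.commute mult.left_commute)
  finally show ?thesis .
qed

lemma ip_sym: "ip u v = ip v u"
  unfolding ip_def by (simp add: algebra_simps)

lemma ipL_sym: "ip (L u) v = ip u (L v)"
proof -
  have "ip (L u) v = (\<Sum>i\<in>UNIV. d i * u i * v i) - (\<Sum>i\<in>UNIV. \<Sum>j\<in>UNIV. w i j * v j * u i)"
    by (simp only: ipL cross_sym[of u v])
  also have "\<dots> = ip (L v) u" by (simp add: ipL mult_ac)
  finally show ?thesis by (simp add: ip_sym)
qed

lemma ipL_psd: "ip (L u) u \<ge> 0"
proof -
  have e: "(\<Sum>i\<in>UNIV. \<Sum>j\<in>UNIV. w i j * (u i - u j)^2) = 2 * ip (L u) u"
  proof -
    have a: "(\<Sum>i\<in>UNIV. \<Sum>j\<in>UNIV. w i j * (u j)^2) = (\<Sum>i\<in>UNIV. d i * (u i)^2)"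
      by (subst sum.swap) (simp add: degree_def sym sum_distrib_right)
    have b: "(\<Sum>i\<in>UNIV. \<Sum>j\<in>UNIV. w i j * (u i)^2) = (\<Sum>i\<in>UNIV. d i * (u i)^2)"
      by (simp add: degree_def sum_distrib_right)
    have "(\<Sum>i\<in>UNIV. \<Sum>j\<in>UNIV. w i j * (u i - u j)^2) =
       (\<Sum>i\<in>UNIV. \<Sum>j\<in>UNIV. w i j * (u i)^2) + (\<Sum>i\<in>UNIV. \<Sum>j\<in>UNIV. w i j * (u j)^2)
        - 2 * (\<Sum>i\<in>UNIV. \<Sum>j\<in>UNIV. w i j * u j * u i)"
      by (simp add: power2_diff algebra_simps sum.distrib sum_subtractf sum_distrib_left)
    also have "\<dots> = 2 * ip (L u) u"
      unfolding a b ipL by (simp add: power2_eq_square algebra_simps)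
    finally show ?thesis .
  qed
  have "0 \<le> (\<Sum>i\<in>UNIV. \<Sum>j\<in>UNIV. w i j * (u i - u j)^2)"
    by (intro sum_nonneg mult_nonneg_nonneg nonneg) auto
  with e show ?thesis by simp
qed

lemma ip_pos: "ip u u \<ge> 0"
  unfolding ip_def by (intro sum_nonneg) (auto simp: mult.assoc)

lemma ip_zero: "ip u u = 0 \<Longrightarrow> u = (\<lambda>_. 0)"
proof -
  assume h: "ip u u = 0"
  have "\<forall>i\<in>UNIV. d i powr r * u i * u i = 0"
    using h unfolding ip_def
    by (subst sum_nonneg_eq_0_iff[symmetric]) (auto simp: mult.assoc)
  show ?thesis
  proof
    fix i
    have "d i powr r > 0" using degpos[of i] by simp
    moreover have "d i powr r * u i * u i = 0" using \<open>\<forall>i\<in>UNIV. _\<close> by blast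
    ultimately show "u i = 0" by simp
  qed
qed

lemma ip_lin_l: "ip (\<lambda>i. a * u i + b * v i) z = a * ip u z + b * ip v z"
  unfolding ip_def by (simp add: algebra_simps sum.distrib sum_distrib_left)

end


context wgraph begin

lemma L_scale: "L (\<lambda>i. a * u i) = (\<lambda>i. a * L u i)"
  unfolding L_alt by (rule ext) (simp add: algebra_simps sum_distrib_left)

lemma L_add: "L (\<lambda>i. u i + s * v i) = (\<lambda>i. L u i + s * L v i)"
  using L_lin[of 1 u s v] by simp

lemma ip_quad: "ip (\<lambda>i. u i + s * v i) (\<lambda>i. u i + s * v i) = ip u u + 2 * s * ip u v + s^2 * ip v v"
  unfolding ip_def by (simp add: algebra_simps sum.distrib sum_distrib_left power2_eq_square)

lemma ipL_quad: "ip (L (\<lambda>i. u i + s * v i)) (\<lambda>i. u i + s * v i) = ip (L u) u + 2 * s * ip (L u) v + s^2 * ip (L v) v"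
proof -
  have "ip (L (\<lambda>i. u i + s * v i)) (\<lambda>i. u i + s * v i) =
     ip (L u) u + s * ip (L u) v + s * ip (L v) u + s^2 * ip (L v) v"
    unfolding L_add ip_def by (simp add: algebra_simps sum.distrib sum_distrib_left power2_eq_square)
  also have "ip (L v) u = ip (L u) v" by (metis ipL_sym ip_sym)
  finally show ?thesis by simp
qed

lemma ip_scale: "ip (\<lambda>i. a * u i) (\<lambda>i. a * u i) = a^2 * ip u u"
  unfolding ip_def by (simp add: algebra_simps sum_distrib_left power2_eq_square)

lemma ipL_scale: "ip (L (\<lambda>i. a * u i)) (\<lambda>i. a * u i) = a^2 * ip (L u) u"
  unfolding L_scale ip_def by (simp add: algebra_simps sum_distrib_left power2_eq_square)

lemma ip_posI: "u \<noteq> (\<lambda>_. 0) \<Longrightarrow> ip u u > 0"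
  using ip_pos[of u] ip_zero[of u] by linarith

lemma rayleigh_max: "\<exists>u0. u0 \<noteq> (\<lambda>_. 0) \<and> (\<forall>y. ip (L y) y * ip u0 u0 \<le> ip (L u0) u0 * ip y y)"
proof -
  define f where "f = (\<lambda>x::real^'v. ip (L (vec_nth x)) (vec_nth x) / ip (vec_nth x) (vec_nth x))"
  have nz: "ip (vec_nth x) (vec_nth x) \<noteq> 0" if "x \<in> sphere 0 1" for x
  proof -
    have "x \<noteq> 0" using that by auto
    then have "vec_nth x \<noteq> (\<lambda>_. 0)" by (auto simp: vec_eq_iff)
    then show ?thesis using ip_posI by fastforce
  qed
  have cont: "continuous_on (sphere 0 1) f"
    unfolding f_def
    apply (rule continuous_on_divide)
    subgoal by (simp add: ip_def L_alt, intro continuous_intros)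
    subgoal by (simp add: ip_def L_alt, intro continuous_intros)
    subgoal using nz by blast
    done
  obtain x0 where x0: "x0 \<in> sphere 0 1" "\<And>y. y \<in> sphere 0 1 \<Longrightarrow> f y \<le> f x0"
    using continuous_attains_sup[OF compact_sphere _ cont] by auto
  define u0 where "u0 = vec_nth x0"
  have "x0 \<noteq> 0" using x0(1) by auto
  have u0nz: "u0 \<noteq> (\<lambda>_. 0)"
  proof
    assume "u0 = (\<lambda>_. 0)"
    then have "x0 = 0" by (simp add: u0_def vec_eq_iff fun_eq_iff)
    with \<open>x0 \<noteq> 0\<close> show False by simp
  qed
  have pu0: "ip u0 u0 > 0" using ip_posI[OF u0nz] .
  show ?thesis
  proof (intro exI conjI allI)
    show "u0 \<noteq> (\<lambda>_. 0)" by fact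
    fix y :: "'v \<Rightarrow> real"
    show "ip (L y) y * ip u0 u0 \<le> ip (L u0) u0 * ip y y"
    proof (cases "y = (\<lambda>_. 0)")
      case True
      then show ?thesis by (simp add: ip_def graph_laplacian_def)
    next
      case False
      define yv where "yv = (vec_lambda y :: real^'v)"
      have "yv \<noteq> 0" using False by (auto simp: yv_def vec_eq_iff)
      then have nyv: "norm yv > 0" by simp
      define a where "a = 1 / norm yv"
      have a: "a > 0" using nyv by (simp add: a_def)
      define x where "x = a *\<^sub>R yv"
      have xs: "x \<in> sphere 0 1" using nyv by (simp add: x_def a_def)
      have vx: "vec_nth x = (\<lambda>i. a * y i)" by (auto simp: x_def yv_def)
      have "f x \<le> f x0" using x0(2)[OF xs] .
      then have "ip (L y) y / ip y y \<le> ip (L u0) u0 / ip u0 u0"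
        using a by (simp add: f_def vx ip_scale ipL_scale u0_def)
      moreover have "ip y y > 0" using ip_posI[OF False] .
      ultimately show ?thesis using pu0 by (simp add: divide_simps mult.commute)
    qed
  qed
qed

end


context wgraph begin

lemma top_eig: "\<exists>lam u0. lam \<ge> 0 \<and> u0 \<noteq> (\<lambda>_. 0) \<and> L u0 = (\<lambda>i. lam * u0 i) \<and> (\<forall>y. ip (L y) y \<le> lam * ip y y)"
proof -
  obtain u0 where u0: "u0 \<noteq> (\<lambda>_. 0)" "\<And>y. ip (L y) y * ip u0 u0 \<le> ip (L u0) u0 * ip y y"
    using rayleigh_max by blast
  have p: "ip u0 u0 > 0" using ip_posI[OF u0(1)] .
  define lam where "lam = ip (L u0) u0 / ip u0 u0"
  have lam0: "lam \<ge> 0" using p ipL_psd[of u0] by (simp add: lam_def)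
  have bnd: "ip (L y) y \<le> lam * ip y y" for y
    using u0(2)[of y] p by (simp add: lam_def field_simps)
  have l0: "ip (L u0) u0 = lam * ip u0 u0" using p by (simp add: lam_def)
  have D0: "ip (L u0) v - lam * ip u0 v = 0" for v
  proof -
    define D where "D = ip (L u0) v - lam * ip u0 v"
    define E where "E = ip (L v) v - lam * ip v v"
    have E: "E \<le> 0" using bnd[of v] by (simp add: E_def)
    have F: "2 * s * D + s^2 * E \<le> 0" for s
    proof -
      have "ip (L (\<lambda>i. u0 i + s * v i)) (\<lambda>i. u0 i + s * v i) \<le> lam * ip (\<lambda>i. u0 i + s * v i) (\<lambda>i. u0 i + s * v i)"
        by (rule bnd)
      then show ?thesis unfolding ipL_quad ip_quad D_def E_def using l0 by (simp add: algebra_simps)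
    qed
    define t where "t = 1 / (1 + \<bar>E\<bar>)"
    have t: "t > 0" "t * E \<ge> -1"
      unfolding t_def using E by (auto simp: field_simps)
    have "2 * (t*D) * D + (t*D)^2 * E \<le> 0" using F[of "t*D"] .
    then have "t * D^2 * (2 + t * E) \<le> 0" by (simp add: algebra_simps power2_eq_square)
    moreover have "t * D^2 * (2 + t * E) \<ge> t * D^2 * 1"
      using t by (intro mult_left_mono) auto
    ultimately have "t * D^2 \<le> 0" by simp
    then have "D^2 \<le> 0" using t by (simp add: mult_le_0_iff)
    then show ?thesis unfolding D_def by simp
  qed
  define v where "v = (\<lambda>i. L u0 i - lam * u0 i)"
  have "ip v v = ip (L u0) v - lam * ip u0 v"
    unfolding v_def ip_def by (simp add: algebra_simps sum_subtractf sum_distrib_left sum.distrib)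
  then have "ip v v = 0" using D0 by simp
  then have "v = (\<lambda>_. 0)" by (rule ip_zero)
  then have "L u0 = (\<lambda>i. lam * u0 i)" by (auto simp: v_def fun_eq_iff)
  then show ?thesis using lam0 u0(1) bnd by blast
qed

lemma CS: "(ip (L u) v)^2 \<le> ip (L u) u * ip (L v) v"
proof -
  define a where "a = ip (L u) u"
  define b where "b = ip (L u) v"
  define c where "c = ip (L v) v"
  have q: "0 \<le> a + 2 * s * b + s^2 * c" for s
    using ipL_psd[of "\<lambda>i. u i + s * v i"] unfolding ipL_quad a_def b_def c_def .
  have c0: "c \<ge> 0" using ipL_psd[of v] by (simp add: c_def)
  show ?thesis
  proof (cases "c = 0")
    case True
    have "b = 0"
    proof (rule ccontr)
      assume "b \<noteq> 0"
      have "0 \<le> a + 2 * (-(a+1)/(2*b)) * b" using q[of "-(a+1)/(2*b)"] True by simp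
      then show False using \<open>b \<noteq> 0\<close> by (simp add: field_simps)
    qed
    then show ?thesis using True by (simp add: b_def c_def)
  next
    case False
    then have cp: "c > 0" using c0 by simp
    have "0 \<le> a + 2 * (-b/c) * b + (-b/c)^2 * c" using q .
    then have "0 \<le> a - b^2 / c" using cp by (simp add: power2_eq_square field_simps)
    then have "b^2 \<le> a * c" using cp by (simp add: field_simps)
    then show ?thesis by (simp add: a_def b_def c_def)
  qed
qed

lemma norm_bound:
  assumes lam: "lam \<ge> 0" "\<And>y. ip (L y) y \<le> lam * ip y y"
  shows "ip (L u) (L u) \<le> lam^2 * ip u u"
proof -
  define N where "N = ip (L u) (L u)"
  have N0: "N \<ge> 0" using ip_pos by (simp add: N_def)
  have "N^2 \<le> ip (L u) u * ip (L (L u)) (L u)" using CS[of u "L u"] by (simp add: N_def)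
  also have "\<dots> \<le> (lam * ip u u) * (lam * N)"
    using lam(2)[of u] lam(2)[of "L u"] ipL_psd[of u] ipL_psd[of "L u"]
    by (intro mult_mono) (auto simp: N_def)
  finally have h: "N * N \<le> N * (lam^2 * ip u u)" by (simp add: power2_eq_square algebra_simps)
  show ?thesis
  proof (cases "N = 0")
    case True then show ?thesis using lam(1) ip_pos[of u] by (simp add: N_def)
  next
    case False then have "N > 0" using N0 by simp
    then show ?thesis using h by (simp add: N_def)
  qed
qed

lemma iter_bound:
  assumes lam: "lam \<ge> 0" "\<And>y. ip (L y) y \<le> lam * ip y y"
  shows "ip ((L^^k) u) ((L^^k) u) \<le> lam^(2*k) * ip u u"
proof (induction k)
  case 0 then show ?case by simp
next
  case (Suc k)
  have "ip ((L^^Suc k) u) ((L^^Suc k) u) \<le> lam^2 * ip ((L^^k) u) ((L^^k) u)"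
    using norm_bound[OF lam] by simp
  also have "\<dots> \<le> lam^2 * (lam^(2*k) * ip u u)"
    using Suc lam(1) by (intro mult_left_mono) auto
  finally show ?case by (simp add: power2_eq_square mult_ac)
qed

lemma pointwise:
  assumes "r \<ge> 0"
  shows "\<bar>f i\<bar> \<le> sqrt (ip f f) / min_degree w powr (r/2)"
proof -
  have dm: "min_degree w \<le> d i" "min_degree w > 0"
    unfolding min_degree_def using degpos by (auto intro!: Min_le)
  have sq: "(d i powr (r/2))^2 = d i powr r"
    by (simp add: power2_eq_square powr_add[symmetric])
  have "(f i)^2 * d i powr r \<le> ip f f"
  proof -
    have "\<forall>x\<in>UNIV. 0 \<le> d x powr r * f x * f x"
      by (simp add: mult.assoc)
    then have "d i powr r * f i * f i \<le> ip f f"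
      unfolding ip_def by (intro member_le_sum) auto
    then show ?thesis by (simp add: power2_eq_square mult_ac)
  qed
  then have "(\<bar>f i\<bar> * d i powr (r/2))^2 \<le> ip f f"
    by (simp add: power_mult_distrib sq)
  then have a: "\<bar>f i\<bar> * d i powr (r/2) \<le> sqrt (ip f f)"
    using real_le_rsqrt by blast
  have "\<bar>f i\<bar> * min_degree w powr (r/2) \<le> \<bar>f i\<bar> * d i powr (r/2)"
    using dm assms by (intro mult_left_mono powr_mono2) auto
  with a have "\<bar>f i\<bar> * min_degree w powr (r/2) \<le> sqrt (ip f f)" by linarith
  then show ?thesis using dm by (simp add: field_simps)
qed

lemma Lc_real: "graph_laplacian_c w r (\<lambda>i. complex_of_real (u i)) = (\<lambda>i. complex_of_real (L u i))"
  unfolding graph_laplacian_c_def graph_laplacian_def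
  by (simp add: of_real_sum[symmetric])

lemma eig_bdd: "c \<in> laplacian_eigenvalues w r \<Longrightarrow> cmod c \<le> 2 * (\<Sum>i\<in>UNIV. d i powr (-r) * d i)"
proof -
  assume "c \<in> laplacian_eigenvalues w r"
  then obtain u where u: "u \<noteq> (\<lambda>_. 0)" "graph_laplacian_c w r u = (\<lambda>i. c * u i)"
    unfolding laplacian_eigenvalues_def by blast
  obtain i where i: "\<And>j. cmod (u j) \<le> cmod (u i)"
  proof -
    have "finite (range (\<lambda>j. cmod (u j)))" by simp
    then have "Max (range (\<lambda>j. cmod (u j))) \<in> range (\<lambda>j. cmod (u j))" by (intro Max_in) auto
    then obtain i where "cmod (u i) = Max (range (\<lambda>j. cmod (u j)))" by (metis (no_types, lifting) imageE)
    moreover have "cmod (u j) \<le> Max (range (\<lambda>j. cmod (u j)))" for j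
      by (rule Max_ge) auto
    ultimately show ?thesis using that by metis
  qed
  have ui: "cmod (u i) > 0"
  proof (rule ccontr)
    assume "\<not> cmod (u i) > 0"
    then have "\<And>j. u j = 0" using i by (metis norm_le_zero_iff order.trans not_less)
    then show False using u(1) by auto
  qed
  have "cmod c * cmod (u i) = cmod (c * u i)" by (simp add: norm_mult)
  also have "c * u i = complex_of_real (d i powr (-r)) * (\<Sum>j\<in>UNIV. complex_of_real (w i j) * (u i - u j))"
    using fun_cong[OF u(2), of i] by (simp add: graph_laplacian_c_def)
  also have "cmod \<dots> \<le> d i powr (-r) * (\<Sum>j\<in>UNIV. w i j * (2 * cmod (u i)))"
  proof -
    have "cmod (\<Sum>j\<in>UNIV. complex_of_real (w i j) * (u i - u j)) \<le> (\<Sum>j\<in>UNIV. cmod (complex_of_real (w i j) * (u i - u j)))"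
      by (rule norm_sum)
    also have "\<dots> \<le> (\<Sum>j\<in>UNIV. w i j * (2 * cmod (u i)))"
    proof (rule sum_mono)
      fix j
      have "cmod (u i - u j) \<le> cmod (u i) + cmod (u j)" by (rule norm_triangle_ineq4)
      also have "\<dots> \<le> 2 * cmod (u i)" using i[of j] by simp
      finally show "cmod (complex_of_real (w i j) * (u i - u j)) \<le> w i j * (2 * cmod (u i))"
        using nonneg[of i j] by (simp add: norm_mult mult_left_mono)
    qed
    finally show ?thesis by (simp add: norm_mult mult_left_mono)
  qed
  also have "\<dots> = (2 * (d i powr (-r) * d i)) * cmod (u i)"
    by (simp add: degree_def sum_distrib_left[symmetric] sum_distrib_right[symmetric] mult_ac)
  finally have "cmod c \<le> 2 * (d i powr (-r) * d i)" using ui by simp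
  also have "d i powr (-r) * d i \<le> (\<Sum>i\<in>UNIV. d i powr (-r) * d i)"
    by (rule member_le_sum) (simp, metis degpos less_imp_le mult_nonneg_nonneg powr_ge_zero, simp)
  finally show ?thesis by simp
qed

lemma spec_bound:
  "\<exists>lam. 0 \<le> lam \<and> lam \<le> laplacian_spectral_radius w r \<and> (\<forall>k u. ip ((L^^k) u) ((L^^k) u) \<le> lam^(2*k) * ip u u)"
proof -
  obtain lam u0 where l: "lam \<ge> 0" "u0 \<noteq> (\<lambda>_. 0)" "L u0 = (\<lambda>i. lam * u0 i)" "\<And>y. ip (L y) y \<le> lam * ip y y"
    using top_eig by blast
  have "complex_of_real lam \<in> laplacian_eigenvalues w r"
    unfolding laplacian_eigenvalues_def
  proof (intro CollectI exI conjI)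
    show "(\<lambda>i. complex_of_real (u0 i)) \<noteq> (\<lambda>_. 0)" using l(2) by (auto simp: fun_eq_iff)
    show "graph_laplacian_c w r (\<lambda>i. complex_of_real (u0 i)) = (\<lambda>i. complex_of_real lam * complex_of_real (u0 i))"
      unfolding Lc_real l(3) by simp
  qed
  moreover have "bdd_above (cmod ` laplacian_eigenvalues w r)"
    using eig_bdd by (auto intro!: bdd_aboveI)
  ultimately have "cmod (complex_of_real lam) \<le> laplacian_spectral_radius w r"
    unfolding laplacian_spectral_radius_def by (intro cSup_upper imageI)
  then have "lam \<le> laplacian_spectral_radius w r" using l(1) by simp
  then show ?thesis using l(1) iter_bound[OF l(1) l(4)] by blast
qed

end


context wgraph begin

definition mx :: "('v \<Rightarrow> real) \<Rightarrow> real" where "mx v = (\<Sum>j\<in>UNIV. \<bar>v j\<bar>)"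
definition KK :: real where "KK = 2 * (\<Sum>i\<in>UNIV. d i powr (-r) * d i)"
definition RR :: real where "RR = real CARD('v) * KK"

lemma mx_ge: "\<bar>v i\<bar> \<le> mx v"
  unfolding mx_def by (rule member_le_sum) auto

lemma KK_ge: "d i powr (-r) * d i \<le> KK / 2"
  unfolding KK_def
  by simp (rule member_le_sum, simp, metis degpos less_imp_le mult_nonneg_nonneg powr_ge_zero, simp)

lemma KK_nonneg: "KK \<ge> 0"
  unfolding KK_def by (intro mult_nonneg_nonneg sum_nonneg) (auto intro: less_imp_le[OF degpos])

lemma RR_nonneg: "RR \<ge> 0" unfolding RR_def using KK_nonneg by simp

lemma L_crude: "\<bar>L v i\<bar> \<le> KK * mx v"
proof -
  have "\<bar>L v i\<bar> = d i powr (-r) * \<bar>\<Sum>j\<in>UNIV. w i j * (v i - v j)\<bar>"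
    unfolding graph_laplacian_def by (simp add: abs_mult)
  also have "\<bar>\<Sum>j\<in>UNIV. w i j * (v i - v j)\<bar> \<le> (\<Sum>j\<in>UNIV. w i j * (2 * mx v))"
  proof -
    have "\<bar>\<Sum>j\<in>UNIV. w i j * (v i - v j)\<bar> \<le> (\<Sum>j\<in>UNIV. \<bar>w i j * (v i - v j)\<bar>)" by (rule sum_abs)
    also have "\<dots> \<le> (\<Sum>j\<in>UNIV. w i j * (2 * mx v))"
    proof (rule sum_mono)
      fix j
      have "\<bar>v i - v j\<bar> \<le> 2 * mx v" using mx_ge[of v i] mx_ge[of v j] by linarith
      then show "\<bar>w i j * (v i - v j)\<bar> \<le> w i j * (2 * mx v)"
        using nonneg[of i j] by (simp add: abs_mult mult_left_mono)
    qed
    finally show ?thesis .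
  qed
  then have "d i powr (-r) * \<bar>\<Sum>j\<in>UNIV. w i j * (v i - v j)\<bar> \<le> d i powr (-r) * (\<Sum>j\<in>UNIV. w i j * (2 * mx v))"
    by (intro mult_left_mono) auto
  also have "\<dots> = 2 * (d i powr (-r) * d i) * mx v"
    by (simp add: degree_def sum_distrib_left[symmetric] sum_distrib_right[symmetric] mult_ac)
  also have "\<dots> \<le> KK * mx v"
    using KK_ge[of i] by (intro mult_right_mono) (auto simp: mx_def)
  finally show ?thesis .
qed

lemma mx_L: "mx (L v) \<le> RR * mx v"
proof -
  have "mx (L v) \<le> (\<Sum>j\<in>(UNIV::'v set). KK * mx v)"
    unfolding mx_def[of "L v"] by (rule sum_mono) (rule L_crude)
  then show ?thesis by (simp add: RR_def)
qed

lemma pow_crude: "\<bar>(L^^n) v i\<bar> \<le> RR^n * mx v"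
proof -
  have "mx ((L^^n) v) \<le> RR^n * mx v"
  proof (induction n)
    case 0 then show ?case by simp
  next
    case (Suc n)
    have "mx ((L^^Suc n) v) \<le> RR * mx ((L^^n) v)" using mx_L by simp
    also have "\<dots> \<le> RR * (RR^n * mx v)" using Suc RR_nonneg by (intro mult_left_mono) auto
    finally show ?case by (simp add: mult_ac)
  qed
  then show ?thesis using mx_ge[of "(L^^n) v" i] by linarith
qed

lemma heat_summable_abs: "summable (\<lambda>k. \<bar>(-t)^k / fact k * (L^^k) v i\<bar>)"
proof (rule summable_comparison_test[where g = "\<lambda>k. (\<bar>t\<bar> * RR)^k / fact k * mx v"])
  show "\<exists>N. \<forall>n\<ge>N. norm \<bar>(- t) ^ n / fact n * (L ^^ n) v i\<bar> \<le> (\<bar>t\<bar> * RR) ^ n / fact n * mx v"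
  proof (intro exI allI impI)
    fix n :: nat
    have "\<bar>(- t) ^ n / fact n * (L ^^ n) v i\<bar> = \<bar>t\<bar>^n / fact n * \<bar>(L ^^ n) v i\<bar>"
      by (simp add: abs_mult power_abs)
    also have "\<dots> \<le> \<bar>t\<bar>^n / fact n * (RR^n * mx v)"
      by (intro mult_left_mono pow_crude) auto
    finally show "norm \<bar>(- t) ^ n / fact n * (L ^^ n) v i\<bar> \<le> (\<bar>t\<bar> * RR) ^ n / fact n * mx v"
      by (simp add: power_mult_distrib)
  qed
  show "summable (\<lambda>k. (\<bar>t\<bar> * RR) ^ k / fact k * mx v)"
    by (intro summable_mult2) (use summable_exp_generic[of "\<bar>t\<bar> * RR"] in \<open>simp add: divide_inverse mult.commute\<close>)
qed

lemma heat_summable: "summable (\<lambda>k. (-t)^k / fact k * (L^^k) v i)"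
  by (rule summable_rabs_cancel) (rule heat_summable_abs)

lemma heat_sums: "(\<lambda>k. (-t)^k / fact k * (L^^k) v i) sums heat w r t v i"
  unfolding heat_def using heat_summable by (simp add: summable_sums)

lemma ip_ind: "ip (indicator S) (indicator S) = vol w r S"
  unfolding ip_def vol_def by (simp add: indicator_def if_distrib sum.If_cases)

lemma part1:
  assumes r0: "r \<ge> 0" and tau: "\<tau> > 0" and S: "S \<noteq> {}"
    and cond: "\<tau> < ln (1 + 1/2 * min_degree w powr (r/2) * vol w r S powr (-1/2))
                      / laplacian_spectral_radius w r"
  shows "mbo_step w r \<tau> S = S"
proof -
  obtain lam where lam: "0 \<le> lam" "lam \<le> laplacian_spectral_radius w r"
      "\<And>k u. ip ((L^^k) u) ((L^^k) u) \<le> lam^(2*k) * ip u u"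
    using spec_bound by blast
  define \<rho> where "\<rho> = laplacian_spectral_radius w r"
  define dm where "dm = min_degree w"
  define V where "V = vol w r S"
  have dm: "dm > 0" unfolding dm_def min_degree_def using degpos by (auto)
  have dp: "d i powr r > 0" for i using degpos[of i] by (metis powr_gt_zero less_irrefl)
  have V: "V > 0" unfolding V_def vol_def using S dp
    by (intro sum_pos) auto
  define X where "X = ln (1 + 1/2 * dm powr (r/2) * V powr (-1/2))"
  have Xpos: "1 + 1/2 * dm powr (r/2) * V powr (-1/2) > 0" using dm V by (intro add_pos_nonneg) auto
  have rho: "\<rho> > 0"
  proof (rule ccontr)
    assume "\<not> \<rho> > 0"
    then have "\<rho> = 0" using lam unfolding \<rho>_def by linarith
    then show False using cond tau by (simp add: \<rho>_def)
  qed
  have "\<tau> * \<rho> < X" using cond rho by (simp add: X_def dm_def V_def \<rho>_def field_simps)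
  moreover have "\<tau> * lam \<le> \<tau> * \<rho>" using lam tau by (simp add: \<rho>_def)
  ultimately have "exp (\<tau> * lam) < exp X" by simp
  also have "exp X = 1 + 1/2 * dm powr (r/2) * V powr (-1/2)" using Xpos by (simp add: X_def)
  finally have ex: "exp (\<tau> * lam) - 1 < 1/2 * dm powr (r/2) * V powr (-1/2)" by simp
  define C where "C = sqrt V / dm powr (r/2)"
  have C0: "C \<ge> 0" unfolding C_def using V by simp
  have key: "(exp (\<tau> * lam) - 1) * C < 1/2"
  proof -
    have Cp: "C > 0" unfolding C_def using V dm by simp
    have "(exp (\<tau> * lam) - 1) * C < (1/2 * dm powr (r/2) * V powr (-1/2)) * C"
      using ex Cp by (intro mult_strict_right_mono)
    also have "\<dots> = 1/2 * (V powr (-1/2) * V powr (1/2))"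
      unfolding C_def using dm V by (simp add: powr_half_sqrt[symmetric] field_simps)
    also have "V powr (-1/2) * V powr (1/2) = 1" using V by (simp add: powr_add[symmetric])
    finally show ?thesis by simp
  qed
  have close: "\<bar>heat w r \<tau> (indicator S) i - indicator S i\<bar> < 1/2" for i
  proof -
    define a where "a = (\<lambda>k. (-\<tau>)^k / fact k * (L^^k) (indicator S) i)"
    define b where "b = (\<lambda>k. (\<tau> * lam)^k / fact k * C)"
    have ab: "\<bar>a k\<bar> \<le> b k" for k
    proof -
      have "\<bar>(L^^k) (indicator S) i\<bar> \<le> sqrt (ip ((L^^k) (indicator S)) ((L^^k) (indicator S))) / dm powr (r/2)"
        using pointwise[OF r0] by (simp add: dm_def)
      also have "\<dots> \<le> sqrt (lam^(2*k) * V) / dm powr (r/2)"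
        using lam(3)[of k "indicator S"] dm by (intro divide_right_mono real_sqrt_le_mono) (auto simp: ip_ind V_def)
      also have "sqrt (lam^(2*k) * V) = lam^k * sqrt V"
      proof -
        have "lam^(2*k) = (lam^k)^2" by (simp add: power_mult[symmetric] mult.commute)
        then show ?thesis using lam(1) by (simp add: real_sqrt_mult)
      qed
      finally have "\<bar>(L^^k) (indicator S) i\<bar> \<le> lam^k * C" by (simp add: C_def)
      then have "\<tau>^k / fact k * \<bar>(L^^k) (indicator S) i\<bar> \<le> \<tau>^k / fact k * (lam^k * C)"
        using tau by (intro mult_left_mono) auto
      then show ?thesis using tau by (simp add: a_def b_def abs_mult power_abs power_mult_distrib mult_ac)
    qed
    have bs: "b sums (exp (\<tau> * lam) * C)"
      unfolding b_def using sums_mult2[OF exp_converges[of "\<tau> * lam"], of C]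
      by (simp add: divide_inverse mult_ac)
    have bs1: "(\<lambda>k. b (Suc k)) sums (exp (\<tau> * lam) * C - C)"
      using bs sums_Suc_iff[of b] by (simp add: b_def)
    have as: "a sums heat w r \<tau> (indicator S) i" unfolding a_def by (rule heat_sums)
    have as1: "(\<lambda>k. a (Suc k)) sums (heat w r \<tau> (indicator S) i - indicator S i)"
      using as sums_Suc_iff[of a] by (simp add: a_def)
    have sa: "summable (\<lambda>k. \<bar>a (Suc k)\<bar>)"
      by (rule summable_comparison_test[OF _ sums_summable[OF bs1]]) (use ab in auto)
    have "\<bar>heat w r \<tau> (indicator S) i - indicator S i\<bar> = \<bar>\<Sum>k. a (Suc k)\<bar>"
      using as1 by (simp add: sums_iff)
    also have "\<dots> \<le> (\<Sum>k. \<bar>a (Suc k)\<bar>)" by (rule summable_rabs[OF sa])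
    also have "\<dots> \<le> (\<Sum>k. b (Suc k))"
      by (rule suminf_le) (use ab sa sums_summable[OF bs1] in auto)
    also have "\<dots> = (exp (\<tau> * lam) - 1) * C" using bs1 by (simp add: sums_iff algebra_simps)
    finally show ?thesis using key by linarith
  qed
  show ?thesis
  proof (intro set_eqI iffI)
    fix i assume "i \<in> mbo_step w r \<tau> S"
    then have "heat w r \<tau> (indicator S) i \<ge> 1/2" by (simp add: mbo_step_def)
    then show "i \<in> S" using close[of i] by (cases "i \<in> S") (auto simp: indicator_def)
  next
    fix i assume "i \<in> S"
    have "-(heat w r \<tau> (indicator S) i - indicator S i) < 1/2"
      using close[of i] unfolding abs_less_iff by blast
    then have "heat w r \<tau> (indicator S) i \<ge> 1/2" using \<open>i \<in> S\<close> by simp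
    then show "i \<in> mbo_step w r \<tau> S" by (simp add: mbo_step_def)
  qed
qed

end


lemma binom_step:
  fixes c :: real and x :: "nat \<Rightarrow> real"
  shows "(\<Sum>k\<le>n. of_nat (n choose k) * c^(n-k) * (-1)^k * (c * x k - x (Suc k))) =
         (\<Sum>k\<le>Suc n. of_nat (Suc n choose k) * c^(Suc n - k) * (-1)^k * x k)"
proof -
  define g where "g = (\<lambda>k. of_nat (n choose k) * c^(Suc n - k) * (-1)^k * x k)"
  define h where "h = (\<lambda>j. of_nat (n choose j) * c^(n - j) * (-1)^j * x (Suc j))"
  have a: "(\<Sum>k\<le>n. of_nat (n choose k) * c^(n-k) * (-1)^k * (c * x k - x (Suc k))) =
      (\<Sum>k\<le>n. g k) - (\<Sum>k\<le>n. h k)"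
  proof -
    have "(\<Sum>k\<le>n. of_nat (n choose k) * c^(n-k) * (-1)^k * (c * x k - x (Suc k))) =
        (\<Sum>k\<le>n. g k - h k)"
    proof (rule sum.cong[OF refl])
      fix k assume "k \<in> {..n}"
      then have "Suc n - k = Suc (n - k)" by auto
      then show "of_nat (n choose k) * c^(n-k) * (-1)^k * (c * x k - x (Suc k)) = g k - h k"
        by (simp add: g_def h_def algebra_simps)
    qed
    then show ?thesis by (simp add: sum_subtractf)
  qed
  have b: "(\<Sum>k\<le>n. g k) = g 0 + (\<Sum>k\<le>n. g (Suc k))"
  proof -
    have "(\<Sum>k\<le>Suc n. g k) = (\<Sum>k\<le>n. g k)" by (simp add: g_def)
    moreover have "(\<Sum>k\<le>Suc n. g k) = g 0 + (\<Sum>k\<le>n. g (Suc k))" by (rule sum.atMost_Suc_shift)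
    ultimately show ?thesis by simp
  qed
  have c: "(\<Sum>k\<le>Suc n. of_nat (Suc n choose k) * c^(Suc n - k) * (-1)^k * x k) =
     g 0 + (\<Sum>k\<le>n. g (Suc k) - h k)"
    by (subst sum.atMost_Suc_shift) (simp add: g_def h_def algebra_simps, rule sum.cong, simp_all add: algebra_simps)
  show ?thesis unfolding a b c by (simp add: sum_subtractf)
qed

lemma coef_id:
  fixes t c :: real
  assumes "k \<le> n"
  shows "(-t)^n / fact n * (of_nat (n choose k) * c^(n-k) * (-1)^k) = t^k / fact k * ((-c*t)^(n-k) / fact (n-k))"
proof -
  obtain m where n: "n = k + m" using assms le_Suc_ex by blast
  have nm: "n - k = m" using n by simp
  have f: "of_nat (n choose k) = (fact n / (fact k * fact m) :: real)"
    using binomial_fact[OF assms] nm by simp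
  have F: "(fact n :: real) > 0" by simp
  have e1: "(-t)^n / fact n * (of_nat (n choose k) * c^(n-k) * (-1)^k) = ((-t)^n * (-1)^k) * c^m / (fact k * fact m)"
    unfolding f nm using F by (simp add: divide_simps)
  have e2: "(-t)^n * (-1)^k = t^k * (-t)^m"
  proof -
    have a: "(-t)^n = (-1)^k * t^k * (-t)^m" unfolding n power_add by (simp only: power_minus[of t k])
    have b: "(-1::real)^k * (-1)^k = 1"
    proof -
      have "(-1::real)^k * (-1)^k = (-1)^(k+k)" by (simp only: power_add)
      also have "\<dots> = 1" by (simp add: mult_2[symmetric])
      finally show ?thesis .
    qed
    have "(-t)^n * (-1)^k = ((-1)^k * (-1)^k) * t^k * (-t)^m" unfolding a by (simp only: mult_ac)
    then show ?thesis unfolding b by simp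
  qed
  have e3: "(-t)^m * c^m = (-c*t)^m"
    by (metis mult.commute mult_minus_left power_mult_distrib)
  have "(-t)^n / fact n * (of_nat (n choose k) * c^(n-k) * (-1)^k) = t^k * ((-t)^m * c^m) / (fact k * fact m)"
    unfolding e1 e2 by (simp add: mult.assoc)
  also have "\<dots> = t^k / fact k * ((-c*t)^(n-k) / fact (n-k))" unfolding e3 nm by simp
  finally show ?thesis .
qed

context wgraph begin

definition cc :: real where "cc = KK / 2"
definition A :: "('v \<Rightarrow> real) \<Rightarrow> 'v \<Rightarrow> real" where "A v = (\<lambda>i. cc * v i - L v i)"

lemma cc_ge: "d i powr (-r) * d i \<le> cc" using KK_ge by (simp add: cc_def)
lemma cc_nonneg: "cc \<ge> 0" using KK_nonneg by (simp add: cc_def)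

lemma A_alt: "A v i = (cc - d i powr (-r) * d i) * v i + d i powr (-r) * (\<Sum>j\<in>UNIV. w i j * v j)"
  unfolding A_def L_alt by (simp add: algebra_simps)

lemma A_pos: "(\<And>j. v j \<ge> 0) \<Longrightarrow> A v i \<ge> 0"
  unfolding A_alt using cc_ge[of i] nonneg
  by (intro add_nonneg_nonneg mult_nonneg_nonneg sum_nonneg) auto

lemma Apow_pos: "(\<And>j. v j \<ge> 0) \<Longrightarrow> (A^^k) v i \<ge> 0"
proof (induction k arbitrary: i)
  case 0 then show ?case by simp
next
  case (Suc k) then show ?case using A_pos[of "(A^^k) v"] by simp
qed

lemma L_const: "L (\<lambda>_. m) = (\<lambda>_. 0)"
  unfolding graph_laplacian_def by simp

lemma A_sum: "A (\<lambda>i. \<Sum>k\<in>K. a k * u k i) = (\<lambda>i. \<Sum>k\<in>K. a k * A (u k) i)"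
  unfolding A_def L_sum by (simp add: sum_subtractf sum_distrib_left algebra_simps)

lemma A_lin: "A (\<lambda>i. a * u i + b * v i) = (\<lambda>i. a * A u i + b * A v i)"
  unfolding A_def L_lin by (simp add: algebra_simps)

lemma Lpow_lin: "(L^^k) (\<lambda>i. a * u i + b * v i) = (\<lambda>i. a * (L^^k) u i + b * (L^^k) v i)"
  by (induction k) (simp_all add: L_lin)

lemma Apow_lin: "(A^^k) (\<lambda>i. a * u i + b * v i) = (\<lambda>i. a * (A^^k) u i + b * (A^^k) v i)"
  by (induction k) (simp_all add: A_lin)

lemma Lpow_const: "(L^^Suc k) (\<lambda>_. m) = (\<lambda>_. 0)"
proof (induction k)
  case 0 then show ?case by (simp add: L_const)
next
  case (Suc k)
  have "(L^^Suc (Suc k)) (\<lambda>_. m) = L ((L^^Suc k) (\<lambda>_. m))" by simp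
  then show ?case using Suc by (simp add: L_const)
qed

lemma mx_A: "mx (A v) \<le> (real CARD('v) * (cc + KK)) * mx v"
proof -
  have "\<bar>A v i\<bar> \<le> (cc + KK) * mx v" for i
  proof -
    have "\<bar>A v i\<bar> \<le> cc * \<bar>v i\<bar> + \<bar>L v i\<bar>" unfolding A_def
      using cc_nonneg abs_triangle_ineq4[of "cc * v i" "L v i"] by (simp add: abs_mult)
    also have "\<dots> \<le> cc * mx v + KK * mx v" using mx_ge[of v i] L_crude[of v i] cc_nonneg
      by (intro add_mono mult_left_mono) auto
    finally show ?thesis by (simp add: algebra_simps)
  qed
  then have "mx (A v) \<le> (\<Sum>j\<in>(UNIV::'v set). (cc + KK) * mx v)"
    unfolding mx_def[of "A v"] by (intro sum_mono) auto
  then show ?thesis by simp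
qed

definition RA :: real where "RA = real CARD('v) * (cc + KK)"

lemma Apow_crude: "\<bar>(A^^n) v i\<bar> \<le> RA^n * mx v"
proof -
  have RA: "RA \<ge> 0" unfolding RA_def using cc_nonneg KK_nonneg by simp
  have "mx ((A^^n) v) \<le> RA^n * mx v"
  proof (induction n)
    case 0 then show ?case by simp
  next
    case (Suc n)
    have "mx ((A^^Suc n) v) \<le> RA * mx ((A^^n) v)" using mx_A by (simp add: RA_def)
    also have "\<dots> \<le> RA * (RA^n * mx v)" using Suc RA by (intro mult_left_mono) auto
    finally show ?case by (simp add: mult_ac)
  qed
  then show ?thesis using mx_ge[of "(A^^n) v" i] by linarith
qed

lemma E_summable_abs: "summable (\<lambda>k. \<bar>t^k / fact k * (A^^k) v i\<bar>)"
proof (rule summable_comparison_test[where g = "\<lambda>k. (\<bar>t\<bar> * RA)^k / fact k * mx v"])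
  show "\<exists>N. \<forall>n\<ge>N. norm \<bar>t ^ n / fact n * (A ^^ n) v i\<bar> \<le> (\<bar>t\<bar> * RA) ^ n / fact n * mx v"
  proof (intro exI allI impI)
    fix n :: nat
    have "\<bar>t ^ n / fact n * (A ^^ n) v i\<bar> = \<bar>t\<bar>^n / fact n * \<bar>(A ^^ n) v i\<bar>"
      by (simp add: abs_mult power_abs)
    also have "\<dots> \<le> \<bar>t\<bar>^n / fact n * (RA^n * mx v)"
      by (intro mult_left_mono Apow_crude) auto
    finally show "norm \<bar>t ^ n / fact n * (A ^^ n) v i\<bar> \<le> (\<bar>t\<bar> * RA) ^ n / fact n * mx v"
      by (simp add: power_mult_distrib)
  qed
  show "summable (\<lambda>k. (\<bar>t\<bar> * RA) ^ k / fact k * mx v)"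
    by (intro summable_mult2) (use summable_exp_generic[of "\<bar>t\<bar> * RA"] in \<open>simp add: divide_inverse mult.commute\<close>)
qed

lemma Lpow_binom: "(L^^n) v = (\<lambda>i. \<Sum>k\<le>n. of_nat (n choose k) * cc^(n-k) * (-1)^k * (A^^k) v i)"
proof (induction n)
  case 0 then show ?case by simp
next
  case (Suc n)
  have "(L^^Suc n) v = L ((L^^n) v)" by simp
  also have "\<dots> = L (\<lambda>i. \<Sum>k\<le>n. (of_nat (n choose k) * cc^(n-k) * (-1)^k) * (A^^k) v i)"
    using Suc by simp
  also have "\<dots> = (\<lambda>i. \<Sum>k\<le>n. (of_nat (n choose k) * cc^(n-k) * (-1)^k) * L ((A^^k) v) i)"
    by (rule L_sum)
  also have "\<dots> = (\<lambda>i. \<Sum>k\<le>n. of_nat (n choose k) * cc^(n-k) * (-1)^k * (cc * (A^^k) v i - (A^^Suc k) v i))"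
    by (simp add: A_def)
  also have "\<dots> = (\<lambda>i. \<Sum>k\<le>Suc n. of_nat (Suc n choose k) * cc^(Suc n-k) * (-1)^k * (A^^k) v i)"
    by (rule ext) (rule binom_step)
  finally show ?case .
qed

lemma heat_factor: "heat w r t v i = exp (-cc * t) * (\<Sum>k. t^k / fact k * (A^^k) v i)"
proof -
  define a where "a = (\<lambda>k. t^k / fact k * (A^^k) v i)"
  define b where "b = (\<lambda>m. (-cc * t)^m / fact m)"
  have sa: "summable (\<lambda>k. norm (a k))" unfolding a_def real_norm_def by (rule E_summable_abs)
  have sb: "summable (\<lambda>k. norm (b k))"
    unfolding b_def real_norm_def using summable_exp_generic[of "\<bar>-cc * t\<bar>"]
    by (simp add: abs_mult power_abs divide_inverse mult.commute)
  have eb: "(\<Sum>k. b k) = exp (-cc * t)"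
    using exp_converges[of "-cc * t"] unfolding b_def by (simp add: sums_iff divide_inverse mult.commute)
  have "(\<Sum>k. a k) * (\<Sum>k. b k) = (\<Sum>n. \<Sum>k\<le>n. a k * b (n - k))"
    by (rule Cauchy_product[OF sa sb])
  also have "\<dots> = (\<Sum>n. (-t)^n / fact n * (L^^n) v i)"
  proof (rule suminf_cong)
    fix n
    have "(-t)^n / fact n * (L^^n) v i = (\<Sum>k\<le>n. (-t)^n / fact n * (of_nat (n choose k) * cc^(n-k) * (-1)^k) * (A^^k) v i)"
      by (subst Lpow_binom) (simp add: sum_distrib_left mult_ac)
    also have "\<dots> = (\<Sum>k\<le>n. a k * b (n - k))"
    proof (rule sum.cong[OF refl])
      fix k assume "k \<in> {..n}"
      then have "k \<le> n" by simp
      note e = coef_id[OF this, of t cc]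
      show "(-t)^n / fact n * (of_nat (n choose k) * cc^(n-k) * (-1)^k) * (A^^k) v i = a k * b (n - k)"
        unfolding a_def b_def e by (simp only: mult_ac)
    qed
    finally show "(\<Sum>k\<le>n. a k * b (n - k)) = (-t)^n / fact n * (L^^n) v i" by simp
  qed
  also have "\<dots> = heat w r t v i" by (simp add: heat_def)
  finally show ?thesis using eb by (simp add: a_def mult.commute)
qed

end


context wgraph begin

lemma E_summable: "summable (\<lambda>k. t^k / fact k * (A^^k) v i)"
  by (rule summable_rabs_cancel) (rule E_summable_abs)

lemma heat_nonneg:
  assumes "t \<ge> 0" "\<And>j. v j \<ge> 0"
  shows "heat w r t v i \<ge> 0"
  unfolding heat_factor using assms
  by (intro mult_nonneg_nonneg suminf_nonneg E_summable) (auto intro!: Apow_pos)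

lemma heat_pos:
  assumes "t > 0" "\<And>j. v j \<ge> 0" "v i > 0 \<or> A v i > 0"
  shows "heat w r t v i > 0"
proof -
  have tn: "0 \<le> t^k / fact k * (A^^k) v i" for k
    using assms by (intro mult_nonneg_nonneg Apow_pos) auto
  have "(\<Sum>k\<in>{0,1}. t^k / fact k * (A^^k) v i) \<le> (\<Sum>k. t^k / fact k * (A^^k) v i)"
    using tn by (intro sum_le_suminf E_summable) auto
  moreover have "(\<Sum>k\<in>{0,1}. t^k / fact k * (A^^k) v i) = v i + t * A v i" by simp
  moreover have "v i + t * A v i > 0"
    using assms A_pos[of v i] by (auto intro: add_pos_nonneg add_nonneg_pos)
  ultimately show ?thesis unfolding heat_factor by simp
qed

lemma heat_lin: "heat w r t (\<lambda>j. a * u j + b * v j) i = a * heat w r t u i + b * heat w r t v i"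
proof -
  have "(\<lambda>k. (-t)^k / fact k * (L^^k) (\<lambda>j. a * u j + b * v j) i) sums heat w r t (\<lambda>j. a * u j + b * v j) i"
    by (rule heat_sums)
  moreover have "(\<lambda>k. (-t)^k / fact k * (L^^k) (\<lambda>j. a * u j + b * v j) i) sums (a * heat w r t u i + b * heat w r t v i)"
  proof -
    have "(\<lambda>k. a * ((-t)^k / fact k * (L^^k) u i) + b * ((-t)^k / fact k * (L^^k) v i)) sums (a * heat w r t u i + b * heat w r t v i)"
      by (intro sums_add sums_mult heat_sums)
    then show ?thesis by (simp add: Lpow_lin algebra_simps)
  qed
  ultimately show ?thesis by (rule sums_unique2)
qed

lemma heat_const: "heat w r t (\<lambda>_. m) i = m"
proof -
  have "(\<lambda>k. (-t)^k / fact k * (L^^k) (\<lambda>_. m) i) = (\<lambda>k. if k = 0 then m else 0)"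
  proof
    fix k show "(-t)^k / fact k * (L^^k) (\<lambda>_. m) i = (if k = 0 then m else 0)"
      by (cases k) (simp_all add: Lpow_const del: funpow.simps)
  qed
  then have "(\<lambda>k. (-t)^k / fact k * (L^^k) (\<lambda>_. m) i) sums m" using sums_single[of 0 "\<lambda>_. m"] by simp
  then show ?thesis using heat_sums sums_unique2 by blast
qed

lemma heat_time0: "heat w r 0 v i = v i"
proof -
  have "(\<lambda>k. (-0)^k / fact k * (L^^k) v i) = (\<lambda>k. if k = 0 then v i else 0)"
  proof
    fix k :: nat show "(-0)^k / fact k * (L^^k) v i = (if k = 0 then v i else 0)"
      by (cases k) simp_all
  qed
  then have "(\<lambda>k. (-0)^k / fact k * (L^^k) v i) sums v i" using sums_single[of 0 "\<lambda>_. v i"] by simp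
  then show ?thesis using heat_sums sums_unique2 by blast
qed

lemma heat_bound:
  assumes "t \<ge> 0" "\<And>j. \<bar>g j\<bar> \<le> M"
  shows "\<bar>heat w r t g i\<bar> \<le> M"
proof -
  have a: "0 \<le> M * 1 + (-1) * g j" for j using assms(2)[of j] by (simp add: abs_le_iff)
  have b: "0 \<le> M * 1 + 1 * g j" for j using assms(2)[of j] by (simp add: abs_le_iff)
  have "heat w r t (\<lambda>j. M * 1 + (-1) * g j) i \<ge> 0"
    using assms(1) a by (intro heat_nonneg)
  moreover have "heat w r t (\<lambda>j. M * 1 + 1 * g j) i \<ge> 0"
    using assms(1) b by (intro heat_nonneg)
  moreover note heat_lin[of t M "\<lambda>_. 1" "-1" g i] heat_lin[of t M "\<lambda>_. 1" 1 g i] heat_const[of t 1 i]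
  ultimately show ?thesis
    by (simp add: abs_le_iff)
qed

lemma heat_deriv: "((\<lambda>t. heat w r t u i) has_real_derivative (- heat w r t (L u) i)) (at t)"
proof -
  define y where "y = (\<lambda>n. (L^^n) u i)"
  define c where "c = (\<lambda>n. y n / fact n)"
  define f where "f = (\<lambda>x::real. \<Sum>n. c n * x^n)"
  have hf: "heat w r s u i = f (-s)" for s
    unfolding heat_def f_def c_def y_def by (simp add: mult_ac)
  define K where "K = \<bar>t\<bar> + 1"
  have sK: "summable (\<lambda>n. c n * K^n)"
    using heat_summable[of "-K" u i] by (simp add: c_def y_def mult_ac)
  have "(f has_field_derivative (\<Sum>n. diffs c n * (-t)^n)) (at (-t))"
    unfolding f_def by (rule termdiffs_strong[OF sK]) (simp add: K_def)
  also have "(\<Sum>n. diffs c n * (-t)^n) = heat w r t (L u) i"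
  proof -
    have "diffs c n * (-t)^n = (-t)^n / fact n * (L^^n) (L u) i" for n
    proof -
      have "(L^^Suc n) u = (L^^n) (L u)" by (simp add: funpow_Suc_right del: funpow.simps)
      moreover have "diffs c n = y (Suc n) / fact n"
        unfolding diffs_def c_def by (simp add: fact_Suc del: of_nat_Suc)
      ultimately show ?thesis
        by (simp add: y_def field_simps del: funpow.simps)
    qed
    then show ?thesis by (simp add: heat_def)
  qed
  finally have "DERIV f (- t) :> heat w r t (L u) i" .
  then have "DERIV (\<lambda>x. f (- x)) t :> - heat w r t (L u) i" by (simp add: DERIV_mirror)
  then show ?thesis by (simp add: hf)
qed

lemma part2:
  assumes tau: "\<tau> > 0"
    and gnz: "L (indicator S) \<noteq> (\<lambda>_. 0)"
    and cond: "\<tau> \<le> 1 / (2 * Max (range (\<lambda>i. \<bar>L (indicator S) i\<bar>)))"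
  shows "mbo_step w r \<tau> S = S"
proof -
  define g where "g = L (indicator S)"
  define M where "M = Max (range (\<lambda>i. \<bar>g i\<bar>))"
  have gM: "\<bar>g j\<bar> \<le> M" for j unfolding M_def by (rule Max_ge) auto
  obtain j0 where "g j0 \<noteq> 0" using gnz by (auto simp: g_def fun_eq_iff)
  then have Mpos: "M > 0" using gM[of j0] by linarith
  have tM: "\<tau> * M \<le> 1/2" using cond Mpos by (simp add: M_def g_def field_simps)
  have main: "\<exists>\<xi>. 0 < \<xi> \<and> heat w r \<tau> (indicator S) i = indicator S i - \<tau> * heat w r \<xi> g i" for i
  proof -
    have "\<exists>z>0. z < \<tau> \<and> heat w r \<tau> (indicator S) i - heat w r 0 (indicator S) i = (\<tau> - 0) * (- heat w r z g i)"
      by (rule MVT2[OF tau]) (unfold g_def, rule heat_deriv)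
    then show ?thesis by (auto simp: heat_time0)
  qed
  show ?thesis
  proof (intro set_eqI iffI)
    fix i assume "i \<in> S"
    obtain \<xi> where xi: "\<xi> > 0" "heat w r \<tau> (indicator S) i = indicator S i - \<tau> * heat w r \<xi> g i"
      using main by blast
    have "\<tau> * heat w r \<xi> g i \<le> \<tau> * M"
      using heat_bound[of \<xi> g M i] xi(1) gM tau by (intro mult_left_mono) (auto simp: abs_le_iff)
    then have "heat w r \<tau> (indicator S) i \<ge> 1/2" using xi(2) \<open>i \<in> S\<close> tM by simp
    then show "i \<in> mbo_step w r \<tau> S" by (simp add: mbo_step_def)
  next
    fix i assume im: "i \<in> mbo_step w r \<tau> S"
    show "i \<in> S"
    proof (rule ccontr)
      assume iS: "i \<notin> S"
      obtain \<xi> where xi: "\<xi> > 0" "heat w r \<tau> (indicator S) i = indicator S i - \<tau> * heat w r \<xi> g i"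
        using main by blast
      define v where "v = (\<lambda>j. M * 1 + 1 * g j)"
      have v0: "v j \<ge> 0" for j using gM[of j] by (simp add: v_def abs_le_iff)
      have vpos: "v i > 0 \<or> A v i > 0"
      proof (cases "v i > 0")
        case True then show ?thesis by simp
        next
        case False
        then have "g i < 0" using Mpos by (simp add: v_def)
        have dp: "d k powr (-r) > 0" for k using degpos[of k] by simp
        have gi: "g i = d i powr (-r) * (- (\<Sum>j\<in>UNIV. w i j * indicator S j))"
          unfolding g_def L_alt using iS by simp
        have "0 < d i powr (-r) * (\<Sum>j\<in>UNIV. w i j * indicator S j)"
          using \<open>g i < 0\<close> unfolding gi by simp
        then have "(\<Sum>j\<in>UNIV. w i j * indicator S j) > 0"
          using dp[of i] zero_less_mult_pos by blast
        then obtain j where j: "w i j * indicator S j > 0"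
          by (metis (no_types, lifting) not_less sum_nonpos)
        then have jS: "j \<in> S" and wij: "w i j > 0" by (cases "j \<in> S"; simp)+
        have "(\<Sum>l\<in>UNIV. w j l * indicator S l) \<le> (\<Sum>l\<in>UNIV. w j l)"
          using nonneg by (intro sum_mono) (auto simp: indicator_def)
        then have "g j \<ge> 0" unfolding g_def L_alt using jS dp[of j]
          by (intro mult_nonneg_nonneg) (auto simp: degree_def)
        then have vj: "v j > 0" using Mpos by (simp add: v_def)
        have "d i powr (-r) * (w i j * v j) > 0" using dp[of i] wij vj by simp
        also have "d i powr (-r) * (w i j * v j) \<le> d i powr (-r) * (\<Sum>l\<in>UNIV. w i l * v l)"
          using dp[of i] v0 nonneg
          by (intro mult_left_mono member_le_sum) (auto intro!: mult_nonneg_nonneg)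
        also have "\<dots> \<le> A v i" unfolding A_alt using cc_ge[of i] v0[of i] by simp
        finally show ?thesis by simp
      qed
      have "heat w r \<xi> v i > 0" by (rule heat_pos[OF xi(1) v0 vpos])
      then have "M + heat w r \<xi> g i > 0" unfolding v_def heat_lin heat_const by simp
      then have "\<tau> * (M + heat w r \<xi> g i) > 0" using tau by simp
      then have "- (\<tau> * heat w r \<xi> g i) < \<tau> * M" by (simp add: algebra_simps)
      then have "heat w r \<tau> (indicator S) i < 1/2" using xi(2) iS tM by simp
      then show False using im by (simp add: mbo_step_def)
    qed
  qed
qed

end

theorem mainTheorem10:
  fixes w :: "'v::finite \<Rightarrow> 'v \<Rightarrow> real" and r \<tau> :: real and S :: "'v set"
  assumes sym: "\<And>i j. w i j = w j i"
    and nonneg: "\<And>i j. w i j \<ge> 0"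
    and noloop: "\<And>i. w i i = 0"
    and degpos: "\<And>i. degree w i > 0"
    and r: "0 \<le> r" "r \<le> 1"
    and tau: "\<tau> > 0"
    and cond: "(S \<noteq> {} \<and>
                \<tau> < ln (1 + 1/2 * min_degree w powr (r/2) * vol w r S powr (-1/2))
                      / laplacian_spectral_radius w r)
             \<or> (graph_laplacian w r (indicator S) \<noteq> (\<lambda>_. 0) \<and>
                \<tau> \<le> 1 / (2 * Max (range (\<lambda>i. \<bar>graph_laplacian w r (indicator S) i\<bar>))))"
  shows "mbo_step w r \<tau> S = S"
proof -
  interpret wgraph w r using sym nonneg degpos by unfold_locales
  from cond show ?thesis
  proof
    assume "S \<noteq> {} \<and>
                \<tau> < ln (1 + 1/2 * min_degree w powr (r/2) * vol w r S powr (-1/2))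
                      / laplacian_spectral_radius w r"
    then show ?thesis using part1[OF r(1) tau] by blast
  next
    assume "graph_laplacian w r (indicator S) \<noteq> (\<lambda>_. 0) \<and>
                \<tau> \<le> 1 / (2 * Max (range (\<lambda>i. \<bar>graph_laplacian w r (indicator S) i\<bar>)))"
    then show ?thesis using part2[OF tau] by blast
  qed
qed

end
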